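(* For every integer $n\geq 1$, $$\sum_{k=1}^{n}\bar B_{2k}\bar B_{2n-2k}=\frac{1}{n+1}\sum_{k=1}^{n}B_{2k}\bar B_{2n-2k}\binom{2n+2}{2k+2}+2n\bar B_{2n}.$$
   Context: $B_n$ denotes the Bernoulli numbers, defined by $\frac{x}{e^x-1}=\sum_{n\ge 0}B_n\frac{x^n}{n!}$ (so $B_0=1$). $\bar B_n:=\frac{1-2^{n-1}}{2^{n-1}}B_n$ (so $\bar B_0=1$). *)

theory Defs
  imports Complex_Main
begin

text \<open>Bernoulli numbers with the convention x/(e^x-1) = sum B_n x^n/n!, so B_0 = 1, B_1 = -1/2.
  Defined by the standard recurrence B_0 = 1, B_n = -(1/(n+1)) * sum_{k<n} (n+1 choose k) B_k.\<close>
fun bernoulli :: "nat \<Rightarrow> real" where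
  "bernoulli n = (if n = 0 then 1 else
     - (\<Sum>k<n. (if k < n then real (Suc n choose k) * bernoulli k else 0)) / real (Suc n))"

declare bernoulli.simps [simp del]

definition bernoulli_bar :: "nat \<Rightarrow> real" where
  "bernoulli_bar n = (1 - 2 ^ n / 2) / (2 ^ n / 2) * bernoulli n"

end

theory Submission imports Defs "HOL-Computational_Algebra.Formal_Power_Series" begin

definition cv :: "real fps \<Rightarrow> real fps \<Rightarrow> real fps" where
  "cv f g = Abs_fps (\<lambda>n. case n of 0 \<Rightarrow> 0 | Suc m \<Rightarrow>
     (\<Sum>i\<le>m. fact i * fact (m - i) * fps_nth f i * fps_nth g (m-i)) / fact (Suc m))"

lemma cv_nth0[simp]: "fps_nth (cv f g) 0 = 0" by (simp add: cv_def)
lemma cv_nthS: "fps_nth (cv f g) (Suc m) = (\<Sum>i\<le>m. fact i * fact (m - i) * fps_nth f i * fps_nth g (m-i)) / fact (Suc m)"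
  by (simp add: cv_def)

lemma cv_add2: "cv f (g + h) = cv f g + cv f h"
  by (rule fps_ext) (auto simp: cv_def split: nat.split simp: algebra_simps sum.distrib add_divide_distrib)
lemma cv_add1: "cv (g + h) f = cv g f + cv h f"
  by (rule fps_ext) (auto simp: cv_def split: nat.split simp: algebra_simps sum.distrib add_divide_distrib)
lemma cv_smult2: "cv f (fps_const c * g) = fps_const c * cv f g"
  by (rule fps_ext) (auto simp: cv_def split: nat.split simp: algebra_simps sum_distrib_left)

lemma cv_deriv: "fps_deriv (cv f g) = fps_const (fps_nth g 0) * f + cv f (fps_deriv g)"
proof (rule fps_ext)
  fix n
  have "fps_nth (fps_deriv (cv f g)) n = (\<Sum>i\<le>n. fact i * fact (n - i) * fps_nth f i * fps_nth g (n-i)) / fact n"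
    by (simp add: cv_nthS fact_Suc field_simps del: of_nat_Suc)
  also have "\<dots> = fps_nth g 0 * fps_nth f n + fps_nth (cv f (fps_deriv g)) n"
  proof (cases n)
    case 0 then show ?thesis by simp
  next
    case (Suc m)
    have "(\<Sum>i\<le>n. fact i * fact (n - i) * fps_nth f i * fps_nth g (n-i)) =
      (\<Sum>i\<le>m. fact i * fact (n - i) * fps_nth f i * fps_nth g (n-i)) + fact n * fps_nth f n * fps_nth g 0"
      using Suc by simp
    also have "(\<Sum>i\<le>m. fact i * fact (n - i) * fps_nth f i * fps_nth g (n-i)) =
       (\<Sum>i\<le>m. fact i * fact (m - i) * fps_nth f i * (of_nat (m - i + 1) * fps_nth g (m - i + 1)))"
      by (rule sum.cong) (auto simp: Suc Suc_diff_le fact_Suc algebra_simps)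
    finally have eq: "(\<Sum>i\<le>n. fact i * fact (n - i) * fps_nth f i * fps_nth g (n-i)) =
       (\<Sum>i\<le>m. fact i * fact (m - i) * fps_nth f i * (of_nat (m - i + 1) * fps_nth g (m - i + 1))) + fact n * fps_nth f n * fps_nth g 0" .
    show ?thesis unfolding Suc cv_nthS fps_deriv_nth using eq[unfolded Suc]
      by (simp add: add_divide_distrib mult_ac)
  qed
  finally show "fps_nth (fps_deriv (cv f g)) n = fps_nth (fps_const (fps_nth g 0) * f + cv f (fps_deriv g)) n" by simp
qed

lemma cv_exp: "cv (f * fps_exp a) (g * fps_exp a) = fps_exp a * cv f g"
proof -
  have "\<forall>g. fps_nth (cv (f * fps_exp a) (g * fps_exp a)) n = fps_nth (fps_exp a * cv f g) n" for n
  proof (induction n)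
    case 0 then show ?case by simp
  next
    case (Suc n)
    show ?case
    proof
      fix g
      define g' where "g' = fps_deriv g + fps_const a * g"
      have d: "fps_deriv (g * fps_exp a) = g' * fps_exp a" by (simp add: g'_def algebra_simps)
      have key: "fps_const (fps_nth g 0) * (f * fps_exp a) + fps_exp a * cv f g' = fps_deriv (fps_exp a * cv f g)"
        unfolding g'_def cv_add2 cv_smult2 cv_deriv fps_deriv_mult fps_exp_deriv by (simp add: algebra_simps)
      have "of_nat (Suc n) * fps_nth (cv (f * fps_exp a) (g * fps_exp a)) (Suc n)
          = fps_nth (fps_deriv (cv (f * fps_exp a) (g * fps_exp a))) n" by simp
      also have "\<dots> = fps_nth g 0 * fps_nth (f * fps_exp a) n + fps_nth (cv (f * fps_exp a) (g' * fps_exp a)) n"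
        unfolding cv_deriv d by simp
      also have "\<dots> = fps_nth g 0 * fps_nth (f * fps_exp a) n + fps_nth (fps_exp a * cv f g') n"
        using Suc by simp
      also have "\<dots> = fps_nth (fps_const (fps_nth g 0) * (f * fps_exp a) + fps_exp a * cv f g') n"
        by simp
      also have "\<dots> = fps_nth (fps_deriv (fps_exp a * cv f g)) n"
        using key by simp
      also have "\<dots> = of_nat (Suc n) * fps_nth (fps_exp a * cv f g) (Suc n)" by (subst fps_deriv_nth) simp
      finally show "fps_nth (cv (f * fps_exp a) (g * fps_exp a)) (Suc n) = fps_nth (fps_exp a * cv f g) (Suc n)"
        by (simp del: of_nat_Suc)
    qed
  qed
  then show ?thesis by (intro fps_ext) auto
qed


lemma bern_rec: assumes "n \<ge> 2" shows "(\<Sum>k<n. real (n choose k) * bernoulli k) = 0"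
proof -
  obtain m where n: "n = Suc m" and m: "m \<ge> 1" using assms by (cases n) auto
  have "bernoulli m = - (\<Sum>k<m. (if k < m then real (Suc m choose k) * bernoulli k else 0)) / real (Suc m)"
    using m by (subst bernoulli.simps) simp
  also have "(\<Sum>k<m. (if k < m then real (Suc m choose k) * bernoulli k else 0)) = (\<Sum>k<m. real (Suc m choose k) * bernoulli k)"
    by (rule sum.cong) auto
  finally have "real (Suc m) * bernoulli m = - (\<Sum>k<m. real (Suc m choose k) * bernoulli k)"
    by (simp add: field_simps del: of_nat_Suc)
  then show ?thesis unfolding n by simp
qed

definition Bf :: "real fps" where "Bf = Abs_fps (\<lambda>n. bernoulli n / fact n)"
definition Cf :: "real fps" where "Cf = Abs_fps (\<lambda>n. bernoulli_bar n / fact n)"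

lemma Bf_E: "Bf * (fps_exp 1 - 1) = fps_X"
proof (rule fps_ext)
  fix n
  have "fps_nth (Bf * (fps_exp 1 - 1)) n = (\<Sum>i=0..n. bernoulli i / fact i * (if n - i = 0 then 0 else 1 / fact (n - i)))"
    unfolding fps_mult_nth by (intro sum.cong refl) (simp add: Bf_def)
  also have "\<dots> = (\<Sum>i<n. bernoulli i / fact i * (1 / fact (n - i)))"
  proof -
    have "(\<Sum>i=0..n. bernoulli i / fact i * (if n - i = 0 then 0 else 1 / fact (n - i))) =
      (\<Sum>i<Suc n. bernoulli i / fact i * (if n - i = 0 then 0 else 1 / fact (n - i)))"
      by (simp add: atLeast0AtMost lessThan_Suc_atMost)
    also have "\<dots> = (\<Sum>i<n. bernoulli i / fact i * (1 / fact (n - i)))"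
    proof -
      have a: "(\<Sum>i<n. bernoulli i / fact i * (if n - i = 0 then 0 else 1 / fact (n - i))) = (\<Sum>i<n. bernoulli i / fact i * (1 / fact (n - i)))"
        by (rule sum.cong) auto
      show ?thesis by (simp only: sum.lessThan_Suc a) simp
    qed
    finally show ?thesis .
  qed
  also have "\<dots> = (\<Sum>i<n. real (n choose i) * bernoulli i / fact n)"
    by (intro sum.cong refl) (simp add: binomial_fact)
  also have "\<dots> = (\<Sum>i<n. real (n choose i) * bernoulli i) / fact n"
    by (simp add: sum_divide_distrib)
  also have "\<dots> = fps_nth fps_X n"
  proof -
    consider "n = 0" | "n = 1" | "n \<ge> 2" by linarith
    then show ?thesis
    proof cases
      case 3 then show ?thesis using bern_rec[OF 3] by (simp add: fps_X_nth)
    qed (auto simp: fps_X_nth bernoulli.simps)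
  qed
  finally show "fps_nth (Bf * (fps_exp 1 - 1)) n = fps_nth fps_X n" .
qed

definition sc :: "real \<Rightarrow> real fps \<Rightarrow> real fps" where "sc a f = Abs_fps (\<lambda>n. a ^ n * fps_nth f n)"

lemma sc_mult: "sc a (f * g) = sc a f * sc a g"
proof (rule fps_ext)
  fix n
  show "fps_nth (sc a (f * g)) n = fps_nth (sc a f * sc a g) n"
    unfolding sc_def fps_mult_nth fps_nth_Abs_fps sum_distrib_left
    by (rule sum.cong) (auto simp: power_add[symmetric] mult_ac)
qed

lemma sc_diff: "sc a (f - g) = sc a f - sc a g"
  by (rule fps_ext) (simp add: sc_def algebra_simps)
lemma sc_add: "sc a (f + g) = sc a f + sc a g"
  by (rule fps_ext) (simp add: sc_def algebra_simps)
lemma sc_one: "sc a 1 = 1"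
  by (rule fps_ext) (simp add: sc_def)
lemma sc_X: "sc a fps_X = fps_const a * fps_X"
proof (rule fps_ext)
  fix n show "fps_nth (sc a fps_X) n = fps_nth (fps_const a * fps_X) n"
    by (cases "n = 1") (auto simp: sc_def fps_X_nth)
qed
lemma sc_exp: "sc a (fps_exp b) = fps_exp (a * b)"
  by (rule fps_ext) (simp add: sc_def power_mult_distrib)
lemma sc_const: "sc a (fps_const c * f) = fps_const c * sc a f"
  by (rule fps_ext) (simp add: sc_def)

lemma Cf_eq: "Cf = fps_const 2 * sc (1/2) Bf - Bf"
proof (rule fps_ext)
  fix n
  have "bernoulli_bar n = 2 * (1/2)^n * bernoulli n - bernoulli n"
    unfolding bernoulli_bar_def by (simp add: field_simps power_one_over)
  then show "fps_nth Cf n = fps_nth (fps_const 2 * sc (1/2) Bf - Bf) n"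
    by (simp add: Cf_def sc_def Bf_def field_simps)
qed

lemma E_ne: "fps_exp (1::real) - 1 \<noteq> 0"
proof
  assume "fps_exp (1::real) - 1 = 0"
  then have "fps_nth (fps_exp (1::real) - 1) 1 = 0" by simp
  then show False by simp
qed

lemma Eh_sq: "fps_exp (1/2) * fps_exp (1/2) = fps_exp (1::real)"
  by (simp add: fps_exp_add_mult[symmetric])

lemma Cf_E: "Cf * (fps_exp 1 - 1) = fps_X * fps_exp (1/2)"
proof -
  have h: "sc (1/2) Bf * (fps_exp (1/2) - 1) = fps_const (1/2) * fps_X"
    using arg_cong[OF Bf_E, of "sc (1/2)"] by (simp add: sc_mult sc_diff sc_one sc_exp sc_X)
  have "Cf * (fps_exp 1 - 1) = fps_const 2 * (sc (1/2) Bf * (fps_exp (1/2) - 1)) * (fps_exp (1/2) + 1) - Bf * (fps_exp 1 - 1)"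
    unfolding Cf_eq Eh_sq[symmetric] by (simp add: algebra_simps)
  also have "\<dots> = fps_X * fps_exp (1/2)"
    unfolding h Bf_E by (simp add: algebra_simps fps_const_mult[symmetric])
  finally show ?thesis .
qed

lemma Cf_Bf: "Cf = Bf * fps_exp (1/2)"
proof -
  have "(Cf - Bf * fps_exp (1/2)) * (fps_exp 1 - 1) = Cf * (fps_exp 1 - 1) - (Bf * (fps_exp 1 - 1)) * fps_exp (1/2)"
    by (simp add: algebra_simps)
  also have "\<dots> = 0" unfolding Cf_E Bf_E by simp
  finally have "(Cf - Bf * fps_exp (1/2)) * (fps_exp 1 - 1) = 0" .
  then show ?thesis using E_ne by simp
qed

lemma Cf_odd: assumes "odd n" shows "fps_nth Cf n = 0"
proof -
  have e: "fps_exp (-1) * fps_exp 1 = (1::real fps)"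
    by (simp add: fps_exp_add_mult[symmetric])
  have e2: "fps_exp (-(1/2)) * fps_exp 1 = fps_exp (1/2::real)"
    by (simp add: fps_exp_add_mult[symmetric])
  have m1: "fps_const (-1::real) = -1" by (rule fps_ext) simp
  have "sc (-1) Cf * (fps_exp (-1) - 1) = fps_const (-1) * fps_X * fps_exp (-(1/2))"
    using arg_cong[OF Cf_E, of "sc (-1)"] by (simp add: sc_mult sc_diff sc_one sc_exp sc_X)
  then have h: "sc (-1) Cf * (fps_exp (-1) - 1) * fps_exp 1 = fps_const (-1) * fps_X * fps_exp (-(1/2)) * fps_exp 1"
    by simp
  have "sc (-1) Cf * (1 - fps_exp 1) = sc (-1) Cf * (fps_exp (-1) - 1) * fps_exp 1"
    using e by (simp add: algebra_simps)
  also have "\<dots> = fps_const (-1) * fps_X * (fps_exp (-(1/2)) * fps_exp 1)" using h by (simp add: mult_ac)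
  also have "\<dots> = - (fps_X * fps_exp (1/2))" unfolding e2 m1 by simp
  finally have h2: "sc (-1) Cf * (1 - fps_exp 1) = - (fps_X * fps_exp (1/2))" .
  have "(sc (-1) Cf - Cf) * (fps_exp 1 - 1) = - (sc (-1) Cf * (1 - fps_exp 1)) - Cf * (fps_exp 1 - 1)"
    by (simp add: algebra_simps)
  also have "\<dots> = 0" unfolding h2 Cf_E by simp
  finally have "(sc (-1) Cf - Cf) * (fps_exp 1 - 1) = 0" .
  then have "sc (-1) Cf = Cf" using E_ne by simp
  then have "fps_nth (sc (-1) Cf) n = fps_nth Cf n" by simp
  then show ?thesis using assms by (simp add: sc_def)
qed


lemma cv_BX: "fps_nth (cv Bf fps_X) (Suc m) = (if m \<ge> 1 then bernoulli (m - 1) / fact (Suc m) else 0)"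
proof -
  have "fps_nth (cv Bf fps_X) (Suc m) = (\<Sum>i\<le>m. (if i = m - 1 \<and> m \<ge> 1 then bernoulli (m - 1) / fact (Suc m) else 0))"
    unfolding cv_nthS sum_divide_distrib
    by (intro sum.cong refl) (auto simp: fps_X_nth Bf_def)
  also have "\<dots> = (if m \<ge> 1 then bernoulli (m - 1) / fact (Suc m) else 0)"
    by (cases "m \<ge> 1") (simp_all add: sum.delta)
  finally show ?thesis .
qed

lemma cv_XB: "fps_nth (cv fps_X Bf) (Suc m) = (if m \<ge> 1 then bernoulli (m - 1) / fact (Suc m) else 0)"
proof -
  have "fps_nth (cv fps_X Bf) (Suc m) = (\<Sum>i\<le>m. (if i = 1 \<and> m \<ge> 1 then bernoulli (m - 1) / fact (Suc m) else 0))"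
    unfolding cv_nthS sum_divide_distrib
    by (intro sum.cong refl) (auto simp: fps_X_nth Bf_def)
  also have "\<dots> = (if m \<ge> 1 then bernoulli (m - 1) / fact (Suc m) else 0)"
    by (cases "m \<ge> 1") (simp_all add: sum.delta)
  finally show ?thesis .
qed

lemma cv_XX: "fps_nth (cv fps_X fps_X) (Suc m) = (if m = 2 then 1/6 else 0)"
proof -
  have "fps_nth (cv fps_X fps_X) (Suc m) = (\<Sum>i\<le>m. (if i = 1 \<and> m = 2 then 1/6 else 0))"
    unfolding cv_nthS sum_divide_distrib
    by (intro sum.cong refl) (auto simp: fps_X_nth fact_numeral)
  also have "\<dots> = (if m = 2 then 1/6 else 0)"
    by (cases "m = 2") (simp_all add: sum.delta)
  finally show ?thesis .
qed

definition Rf :: "real fps" where "Rf = cv Bf fps_X + cv fps_X Bf + cv fps_X fps_X"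

lemma Rf_even: "fps_nth Rf (2 * k + 2) = 2 * bernoulli (2 * k) / fact (2 * k + 2)"
proof -
  have e: "2 * k + 2 = Suc (Suc (2 * k))" by simp
  show ?thesis unfolding Rf_def fps_add_nth e cv_BX cv_XB cv_XX by simp
qed

lemma Rf_0: "fps_nth Rf 0 = 0" by (simp add: Rf_def)

lemma main_fps: "fps_X * cv Cf Cf = Rf * Cf"
proof -
  define D where "D = fps_X * fps_exp (1/2::real)"
  have CE: "Cf * fps_exp 1 = Cf + D" using Cf_E by (simp add: D_def algebra_simps)
  have "fps_exp 1 * cv Cf Cf = cv (Cf + D) (Cf + D)" using cv_exp[of Cf 1 Cf] CE by simp
  also have "\<dots> = cv Cf Cf + (cv Cf D + cv D Cf + cv D D)" by (simp add: cv_add1 cv_add2 algebra_simps)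
  also have "cv Cf D = fps_exp (1/2) * cv Bf fps_X" unfolding D_def Cf_Bf
    using cv_exp[of Bf "1/2" fps_X] by (simp add: mult_ac)
  also have "cv D Cf = fps_exp (1/2) * cv fps_X Bf" unfolding D_def Cf_Bf
    using cv_exp[of fps_X "1/2" Bf] by (simp add: mult_ac)
  also have "cv D D = fps_exp (1/2) * cv fps_X fps_X" unfolding D_def
    using cv_exp[of fps_X "1/2" fps_X] by (simp add: mult_ac)
  finally have "fps_exp 1 * cv Cf Cf = cv Cf Cf + fps_exp (1/2) * Rf" unfolding Rf_def by (simp add: algebra_simps)
  then have h: "(fps_exp 1 - 1) * cv Cf Cf = fps_exp (1/2) * Rf" by (simp add: algebra_simps)
  have "(fps_X * cv Cf Cf - Rf * Cf) * (fps_exp 1 - 1) = fps_X * ((fps_exp 1 - 1) * cv Cf Cf) - Rf * (Cf * (fps_exp 1 - 1))"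
    by (simp add: algebra_simps)
  also have "\<dots> = 0" unfolding h Cf_E by (simp add: algebra_simps)
  finally show ?thesis using E_ne by simp
qed


lemma sum_even: "(\<And>i. odd i \<Longrightarrow> i < 2*n \<Longrightarrow> g i = (0::real)) \<Longrightarrow>
  (\<Sum>i\<le>2*(n::nat). g i) = (\<Sum>k\<le>n. g (2*k))"
proof (induction n)
  case 0 then show ?case by simp
next
  case (Suc n)
  have "(\<Sum>i\<le>2*Suc n. g i) = (\<Sum>i\<le>2*n. g i) + g (Suc (2*n)) + g (2 * Suc n)"
    by (simp add: sum.atMost_Suc)
  also have "g (Suc (2*n)) = 0" using Suc.prems by simp
  finally show ?case using Suc by (simp add: sum.atMost_Suc)
qed

lemma bb_odd: "odd i \<Longrightarrow> bernoulli_bar i = 0"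
  using Cf_odd[of i] by (simp add: Cf_def)

lemma key: "(\<Sum>k\<le>n. bernoulli_bar (2*k) * bernoulli_bar (2*n - 2*k)) =
  1 / real (n + 1) * (\<Sum>k\<le>n. bernoulli (2*k) * bernoulli_bar (2*n - 2*k) * real ((2*n+2) choose (2*k+2)))"
proof -
  have "fps_nth (fps_X * cv Cf Cf) (Suc (Suc (2*n))) = fps_nth (Rf * Cf) (Suc (Suc (2*n)))"
    using main_fps by simp
  then have eq0: "fps_nth (cv Cf Cf) (Suc (2*n)) = fps_nth (Rf * Cf) (Suc (Suc (2*n)))"
    by (simp only: fps_X_mult_nth) simp
  then have eq: "fps_nth (cv Cf Cf) (Suc (2*n)) = (\<Sum>j=0..2*(n+1). fps_nth Rf j * fps_nth Cf (2*(n+1) - j))"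
    by (simp only: fps_mult_nth) simp
  have "fps_nth (cv Cf Cf) (Suc (2*n)) = (\<Sum>i\<le>2*n. bernoulli_bar i * bernoulli_bar (2*n - i)) / fact (Suc (2*n))"
    unfolding cv_nthS by (simp add: Cf_def)
  also have "(\<Sum>i\<le>2*n. bernoulli_bar i * bernoulli_bar (2*n - i)) = (\<Sum>k\<le>n. bernoulli_bar (2*k) * bernoulli_bar (2*n - 2*k))"
    by (rule sum_even) (simp add: bb_odd)
  finally have L: "fps_nth (cv Cf Cf) (Suc (2*n)) = (\<Sum>k\<le>n. bernoulli_bar (2*k) * bernoulli_bar (2*n - 2*k)) / fact (2*n+1)"
    by simp
  have "(\<Sum>j=0..2*(n+1). fps_nth Rf j * fps_nth Cf (2*(n+1) - j)) = (\<Sum>k\<le>n+1. fps_nth Rf (2*k) * fps_nth Cf (2*(n+1) - 2*k))"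
    unfolding atLeast0AtMost
  proof (rule sum_even)
    fix j assume "odd j" "j < 2*(n+1)"
    then have "odd (2*(n+1) - j)" by presburger
    then show "fps_nth Rf j * fps_nth Cf (2*(n+1) - j) = 0" by (simp add: Cf_odd)
  qed
  also have "\<dots> = (\<Sum>k\<le>n. fps_nth Rf (2*k+2) * fps_nth Cf (2*n - 2*k))"
    unfolding Suc_eq_plus1[symmetric] sum.atMost_Suc_shift by (simp add: Rf_0)
  also have "\<dots> = (\<Sum>k\<le>n. bernoulli (2*k) * bernoulli_bar (2*n - 2*k) * real ((2*n+2) choose (2*k+2)) / (real (n+1) * fact (2*n+1)))"
  proof (rule sum.cong[OF refl])
    fix k assume k: "k \<in> {..n}"
    have c: "real ((2*n+2) choose (2*k+2)) = fact (2*n+2) / (fact (2*k+2) * fact (2*n-2*k))"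
      using k by (subst binomial_fact) auto
    have f: "(fact (2*n+2) :: real) = 2 * real (n+1) * fact (2*n+1)"
      by (simp add: fact_Suc algebra_simps)
    have gen: "\<And>A B F N b c::real. A\<noteq>0 \<Longrightarrow> B\<noteq>0 \<Longrightarrow> F\<noteq>0 \<Longrightarrow> N\<noteq>0 \<Longrightarrow>
      2*b/A*(c/B) = b*c*(2*N*F/(A*B))/(N*F)" by (simp add: field_simps)
    have cf: "fps_nth Cf (2*n - 2*k) = bernoulli_bar (2*n - 2*k) / fact (2*n - 2*k)" by (simp add: Cf_def)
    show "fps_nth Rf (2*k+2) * fps_nth Cf (2*n - 2*k) = bernoulli (2*k) * bernoulli_bar (2*n - 2*k) * real ((2*n+2) choose (2*k+2)) / (real (n+1) * fact (2*n+1))"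
      unfolding Rf_even c f cf by (rule gen) auto
  qed
  also have "\<dots> = (\<Sum>k\<le>n. bernoulli (2*k) * bernoulli_bar (2*n - 2*k) * real ((2*n+2) choose (2*k+2))) / (real (n+1) * fact (2*n+1))"
    by (simp add: sum_divide_distrib)
  finally have J: "(\<Sum>j=0..2*(n+1). fps_nth Rf j * fps_nth Cf (2*(n+1) - j)) = (\<Sum>k\<le>n. bernoulli (2*k) * bernoulli_bar (2*n - 2*k) * real ((2*n+2) choose (2*k+2))) / (real (n+1) * fact (2*n+1))" .
  have gen2: "\<And>S T F N::real. F \<noteq> 0 \<Longrightarrow> N \<noteq> 0 \<Longrightarrow> S / F = T / (N * F) \<Longrightarrow> S = 1 / N * T"
    by (simp add: field_simps)
  show ?thesis
    by (rule gen2[of "fact (2*n+1)" "real (n+1)"]) (use eq L J in auto)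
qed

theorem mainTheorem8:
  fixes n :: nat
  assumes "n \<ge> 1"
  shows "(\<Sum>k=1..n. bernoulli_bar (2*k) * bernoulli_bar (2*n - 2*k)) =
         1 / real (n + 1) * (\<Sum>k=1..n. bernoulli (2*k) * bernoulli_bar (2*n - 2*k) * real ((2*n+2) choose (2*k+2)))
         + 2 * real n * bernoulli_bar (2*n)"
proof -
  have split: "(\<Sum>k\<le>n. f k) = f 0 + (\<Sum>k=1..n. f k)" for f :: "nat \<Rightarrow> real"
    by (simp add: atMost_atLeast0 sum.atLeast_Suc_atMost)
  have b0: "bernoulli 0 = 1" by (simp add: bernoulli.simps[of 0])
  have bb0: "bernoulli_bar 0 = 1" by (simp add: bernoulli_bar_def b0)
  have ch: "real ((2*n+2) choose 2) = (n+1) * (2*n+1)"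
  proof -
    have "real ((2*n+2) choose 2) = fact (2*n+2) / (fact 2 * fact (2*n))"
      by (subst binomial_fact) auto
    also have "(fact (2*n+2) :: real) = (real (2*n+2) * real (2*n+1)) * fact (2*n)"
      by (simp add: fact_Suc algebra_simps)
    also have "(real (2*n+2) * real (2*n+1)) * fact (2*n) / (fact 2 * fact (2*n)) = (real (2*n+2) * real (2*n+1)) / 2"
      by (simp add: fact_numeral)
    finally have X: "real ((2*n+2) choose 2) = real (2*n+2) * real (2*n+1) / 2" .
    show ?thesis unfolding X by (simp add: algebra_simps)
  qed
  have ch: "real ((2*n+2) choose (2*0+2)) = (n+1) * (2*n+1)"
    using ch by (simp only: mult_0_right add_0)
  have "bernoulli_bar (2*n) + (\<Sum>k=1..n. bernoulli_bar (2*k) * bernoulli_bar (2*n - 2*k)) =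
        1 / real (n + 1) * (bernoulli_bar (2*n) * ((n+1) * (2*n+1)) + (\<Sum>k=1..n. bernoulli (2*k) * bernoulli_bar (2*n - 2*k) * real ((2*n+2) choose (2*k+2))))"
    using key[of n] unfolding split[of "\<lambda>k. bernoulli_bar (2*k) * bernoulli_bar (2*n - 2*k)"]
      split[of "\<lambda>k. bernoulli (2*k) * bernoulli_bar (2*n - 2*k) * real ((2*n+2) choose (2*k+2))"]
    using b0 bb0 ch by simp
  then show ?thesis by (simp add: field_simps)
qed

end
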